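(* Let $\mathcal{H}$ be a complex Hilbert space and let $R,S\in\mathbb{B}(\mathcal{H})$ be invertible (with bounded inverses) such that $D(R)\le\|R^{-1}\|^{-2}$ and $D(S)\le\|S^{-1}\|^{-2}$. Then $\omega(RS)\le 2\,\omega(R)\,\omega(S)$.
   Context: $\mathbb{B}(\mathcal{H})$ denotes the bounded linear operators on $\mathcal{H}$. $\omega(A)=\sup\{|\langle Ax,x\rangle| : \|x\|=1\}$ is the numerical radius, and for $A\in\mathbb{B}(\mathcal{H})$, $D(A)=2\min(\|A_1\|^2,\|A_2\|^2)$ where $A_1=\frac{A+A^*}{2}$, $A_2=\frac{A-A^*}{2i}$. *)

theory Defs
  imports "HOL-Analysis.Analysis"
begin

class complex_hilbert = banach +
  fixes scaleC :: "complex \<Rightarrow> 'a \<Rightarrow> 'a"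
    and cinner :: "'a \<Rightarrow> 'a \<Rightarrow> complex"
  assumes scaleC_add_right: "scaleC a (x + y) = scaleC a x + scaleC a y"
    and scaleC_add_left: "scaleC (a + b) x = scaleC a x + scaleC b x"
    and scaleC_scaleC: "scaleC a (scaleC b x) = scaleC (a * b) x"
    and scaleC_one: "scaleC 1 x = x"
    and scaleR_scaleC: "scaleR r x = scaleC (complex_of_real r) x"
    and cinner_commute: "cinner x y = cnj (cinner y x)"
    and cinner_add_left: "cinner (x + y) z = cinner x z + cinner y z"
    and cinner_scaleC_left: "cinner (scaleC a x) y = a * cinner x y"
    and cinner_eq_zero_iff: "cinner x x = 0 \<longleftrightarrow> x = 0"
    and norm_cinner: "norm x = sqrt (Re (cinner x x))"

definition bop :: "('a::complex_hilbert \<Rightarrow> 'a) \<Rightarrow> bool" where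
  "bop A \<longleftrightarrow> bounded_linear A \<and> (\<forall>c x. A (scaleC c x) = scaleC c (A x))"

definition adjoint_op :: "('a::complex_hilbert \<Rightarrow> 'a) \<Rightarrow> ('a \<Rightarrow> 'a)" where
  "adjoint_op A = (SOME B. \<forall>x y. cinner (A x) y = cinner x (B y))"

text \<open>Numerical radius  sup { |<A x, x>| : ||x|| = 1 }  (0 for the trivial space).\<close>
definition num_radius :: "('a::complex_hilbert \<Rightarrow> 'a) \<Rightarrow> real" where
  "num_radius A = Sup (insert 0 {cmod (cinner (A x) x) | x. norm x = 1})"

definition re_part :: "('a::complex_hilbert \<Rightarrow> 'a) \<Rightarrow> ('a \<Rightarrow> 'a)" where
  "re_part A = (\<lambda>x. scaleC (1/2) (A x + adjoint_op A x))"

definition im_part :: "('a::complex_hilbert \<Rightarrow> 'a) \<Rightarrow> ('a \<Rightarrow> 'a)" where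
  "im_part A = (\<lambda>x. scaleC (1/(2*\<i>)) (A x - adjoint_op A x))"

definition D_op :: "('a::complex_hilbert \<Rightarrow> 'a) \<Rightarrow> real" where
  "D_op A = 2 * min ((onorm (re_part A))\<^sup>2) ((onorm (im_part A))\<^sup>2)"

end

theory Submission
  imports Defs
begin



lemma cinner_zero_left[simp]: "cinner 0 y = 0"
  using cinner_add_left[of 0 0 y] by simp

lemma cinner_minus_left[simp]: "cinner (- x) y = - cinner x y"
proof -
  have "cinner x y + cinner (- x) y = 0" using cinner_add_left[of x "-x" y] by simp
  from add.inverse_unique[OF this] show ?thesis by simp
qed

lemma cinner_diff_left: "cinner (x - y) z = cinner x z - cinner y z"
  using cinner_add_left[of x "-y" z] by simp

lemma cinner_zero_right[simp]: "cinner x 0 = 0"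
  by (subst cinner_commute) simp

lemma cinner_add_right: "cinner x (y + z) = cinner x y + cinner x z"
  by (subst (1 2 3) cinner_commute) (simp add: cinner_add_left)

lemma cinner_diff_right: "cinner x (y - z) = cinner x y - cinner x z"
  by (subst (1 2 3) cinner_commute) (simp add: cinner_diff_left)

lemma cinner_scaleC_right: "cinner x (scaleC a y) = cnj a * cinner x y"
  by (subst (1 2) cinner_commute) (simp add: cinner_scaleC_left)

lemma cinner_scaleR_left: "cinner (scaleR r x) y = of_real r * cinner x y"
  by (simp add: scaleR_scaleC cinner_scaleC_left)

lemma cinner_scaleR_right: "cinner x (scaleR r y) = of_real r * cinner x y"
  by (simp add: scaleR_scaleC cinner_scaleC_right)

lemma Im_cinner_self[simp]: "Im (cinner x x) = 0"
proof -
  have "cinner x x = cnj (cinner x x)" by (rule cinner_commute)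
  then show ?thesis by (metis Reals_cnj_iff complex_is_Real_iff)
qed

lemma Re_cinner_self_ge0: "Re (cinner x x) \<ge> 0"
  using norm_cinner[of x] norm_ge_zero[of x] by (metis real_sqrt_ge_0_iff)

lemma norm_sq_cinner: "(norm x)^2 = Re (cinner x x)"
  using norm_cinner[of x] Re_cinner_self_ge0[of x] by simp

lemma cinner_self_eq: "cinner x x = complex_of_real ((norm x)^2)"
  by (simp add: norm_sq_cinner complex_eq_iff)

lemma scaleC_zero_right[simp]: "scaleC a 0 = 0"
  using scaleC_add_right[of a 0 0] by simp

lemma scaleC_zero_left[simp]: "scaleC 0 x = 0"
  using scaleC_add_left[of 0 0 x] by simp

lemma scaleC_minus_right: "scaleC a (- x) = - scaleC a x"
  using scaleC_add_right[of a x "-x"] by (simp add: eq_neg_iff_add_eq_0 add.commute)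

lemma scaleC_diff_right: "scaleC a (x - y) = scaleC a x - scaleC a y"
  using scaleC_add_right[of a x "-y"] by (simp add: scaleC_minus_right)

lemma scaleC_scaleR_comm: "scaleC a (scaleR r x) = scaleR r (scaleC a x)"
  by (simp add: scaleR_scaleC scaleC_scaleC mult.commute)

lemma norm_scaleC: "norm (scaleC a x) = cmod a * norm x"
proof -
  have "(norm (scaleC a x))^2 = Re (cinner (scaleC a x) (scaleC a x))" by (rule norm_sq_cinner)
  also have "\<dots> = Re (a * cnj a * cinner x x)"
    by (simp add: cinner_scaleC_left cinner_scaleC_right mult.assoc)
  also have "\<dots> = (cmod a)^2 * (norm x)^2"
    by (simp add: cinner_self_eq complex_mult_cnj cmod_power2)
  finally have "(norm (scaleC a x))^2 = (cmod a * norm x)^2" by (simp add: power_mult_distrib)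
  then show ?thesis by (simp add: power2_eq_iff_nonneg)
qed

lemma norm_add_sq: "(norm (x + y))^2 = (norm x)^2 + (norm y)^2 + 2 * Re (cinner x y)"
proof -
  have "Re (cinner y x) = Re (cinner x y)" by (subst cinner_commute) simp
  then show ?thesis
    by (simp add: norm_sq_cinner cinner_add_left cinner_add_right)
qed

lemma norm_diff_sq: "(norm (x - y))^2 = (norm x)^2 + (norm y)^2 - 2 * Re (cinner x y)"
proof -
  have "Re (cinner y x) = Re (cinner x y)" by (subst cinner_commute) simp
  then show ?thesis
    by (simp add: norm_sq_cinner cinner_diff_left cinner_diff_right)
qed

lemma parallelogram: fixes x y :: "'a::complex_hilbert" shows "(norm (x + y))^2 + (norm (x - y))^2 = 2 * (norm x)^2 + 2 * (norm y)^2"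
  by (simp add: norm_add_sq norm_diff_sq)

lemma Re_cauchy_schwarz: "Re (cinner x y) \<le> norm x * norm y"
proof (cases "y = 0")
  case True then show ?thesis by simp
next
  case False
  define p where "p = Re (cinner x y)"
  define a where "a = norm x"
  define b where "b = norm y"
  have b: "b > 0" using False b_def by simp
  have ex: "(norm (x - scaleR s y))^2 = a^2 + s^2 * b^2 - 2 * s * p" for s
    by (simp add: norm_diff_sq cinner_scaleR_right a_def b_def p_def power_mult_distrib)
  have "0 \<le> (norm (x - scaleR (p / b^2) y))^2" by simp
  also have "\<dots> = a^2 + (p/b^2)^2 * b^2 - 2 * (p / b^2) * p" by (rule ex)
  also have "\<dots> = a^2 - p^2 / b^2" using b by (simp add: power2_eq_square divide_simps)
  finally have "p^2 \<le> (a*b)^2" using b by (simp add: field_simps power_mult_distrib)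
  then have "p \<le> a * b" using b a_def
    by (metis abs_le_square_iff abs_of_nonneg dual_order.trans abs_ge_self mult_nonneg_nonneg norm_ge_zero less_imp_le)
  then show ?thesis by (simp add: p_def a_def b_def)
qed

lemma cauchy_schwarz: "cmod (cinner x y) \<le> norm x * norm y"
proof -
  define c where "c = cinner x y"
  have "cmod c = Re (cnj (sgn c) * c)"
    proof (cases "c = 0")
    case False
    have "cnj (sgn c) * c = cnj c * c / complex_of_real (cmod c)" by (simp add: sgn_eq)
    also have "\<dots> = complex_of_real ((cmod c)^2 / cmod c)"
      by (simp add: complex_mult_cnj cmod_power2 mult.commute)
    finally show ?thesis using False by (simp add: power2_eq_square)
  qed simp
  also have "\<dots> = Re (cinner x (scaleC (sgn c) y))" by (simp add: cinner_scaleC_right c_def)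
  also have "\<dots> \<le> norm x * norm (scaleC (sgn c) y)" by (rule Re_cauchy_schwarz)
  also have "\<dots> \<le> norm x * norm y"
    by (cases "c = 0") (simp_all add: norm_scaleC norm_sgn)
  finally show ?thesis by (simp add: c_def)
qed

lemma cinner_ext: assumes "\<And>x. cinner x u = cinner x v" shows "u = v"
proof -
  have "cinner (u - v) (u - v) = 0" using assms[of "u-v"] by (simp add: cinner_diff_right)
  then show ?thesis by (simp add: cinner_eq_zero_iff)
qed



lemma riesz:
  fixes f :: "'a::complex_hilbert \<Rightarrow> complex"
  assumes add: "\<And>x y. f (x + y) = f x + f y"
    and sc: "\<And>c x. f (scaleC c x) = c * f x"
    and bd: "\<And>x. cmod (f x) \<le> M * norm x"
  shows "\<exists>z. \<forall>x. f x = cinner x z"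
proof (cases "\<forall>x. f x = 0")
  case True
  then show ?thesis by (intro exI[of _ 0]) simp
next
  case False
  then obtain w where w: "f w \<noteq> 0" by auto
  have f0: "f 0 = 0" using add[of 0 0] by simp
  have fR: "f (scaleR r x) = of_real r * f x" for r x by (simp add: scaleR_scaleC sc)
  have fdiff: "f (x - y) = f x - f y" for x y
    using add[of "x - y" y] by simp
  have blf: "bounded_linear f"
    by (rule bounded_linear_intro[where K=M]) (auto simp: add fR scaleR_conv_of_real bd mult.commute)
  define S where "S = {x. f x = 1}"
  have wS: "scaleC (1 / f w) w \<in> S" using w by (simp add: S_def sc)
  define d where "d = Inf (norm ` S)"
  have bdd: "bdd_below (norm ` S)" by (rule bdd_belowI[of _ 0]) auto
  have dle: "d \<le> norm u" if "u \<in> S" for u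
    unfolding d_def using bdd that by (simp add: cInf_lower)
  have d0: "0 \<le> d" using dle[OF wS] 
    unfolding d_def using wS by (auto intro!: cInf_greatest)
  have "\<exists>x\<in>S. norm x < d + 1 / real (Suc n)" for n
  proof -
    have "Inf (norm ` S) < d + 1 / real (Suc n)" by (simp add: d_def)
    then obtain v where "v \<in> norm ` S" "v < d + 1 / real (Suc n)"
      using cInf_lessD[of "norm ` S"] wS by blast
    then show ?thesis by auto
  qed
  then obtain xs where xs: "\<And>n. xs n \<in> S" "\<And>n. norm (xs n) < d + 1 / real (Suc n)"
    by metis
  define e :: "nat \<Rightarrow> real" where "e n = 1 / real (Suc n)" for n
  have e_pos: "0 < e n" "e n \<le> 1" for n by (auto simp: e_def)
  have key: "(norm (xs n - xs m))^2 \<le> (4 * d + 2) * (e n + e m)" for n m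
  proof -
    have mid: "scaleR (1/2) (xs n + xs m) \<in> S"
      using xs(1)[of n] xs(1)[of m] by (simp add: S_def fR add)
    have "d \<le> norm (scaleR (1/2) (xs n + xs m))" by (rule dle[OF mid])
    then have h1: "2 * d \<le> norm (xs n + xs m)" by simp
    have h2: "(2*d)^2 \<le> (norm (xs n + xs m))^2" using h1 d0 by (intro power_mono) auto
    have a: "norm (xs n) \<le> d + e n" "norm (xs m) \<le> d + e m"
      using xs(2)[of n] xs(2)[of m] by (auto simp: e_def)
    have a2: "(norm (xs n))^2 \<le> (d + e n)^2" "(norm (xs m))^2 \<le> (d + e m)^2"
      using a by (auto intro!: power_mono)
    have p: "(norm (xs n - xs m))^2 = 2 * (norm (xs n))^2 + 2 * (norm (xs m))^2 - (norm (xs n + xs m))^2"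
      using parallelogram[of "xs n" "xs m"] by simp
    have "(norm (xs n - xs m))^2 \<le> 2 * (d + e n)^2 + 2 * (d + e m)^2 - 4 * d^2"
      using p a2 h2 by (simp add: power_mult_distrib)
    also have "\<dots> = 4 * d * (e n + e m) + 2 * (e n * e n) + 2 * (e m * e m)"
      by (simp add: power2_eq_square algebra_simps)
    also have "\<dots> \<le> (4 * d + 2) * (e n + e m)"
    proof -
      have "e n * e n \<le> e n" "e m * e m \<le> e m"
        using e_pos[of n] e_pos[of m] by (auto intro: mult_left_le)
      then show ?thesis by (simp add: algebra_simps)
    qed
    finally show ?thesis .
  qed
  have "Cauchy xs"
  proof (rule metric_CauchyI)
    fix \<epsilon> :: real assume ep: "0 < \<epsilon>"
    obtain N :: nat where N: "2 * (4 * d + 2) / \<epsilon>^2 < real N"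
      using reals_Archimedean2 by blast
    show "\<exists>M. \<forall>m\<ge>M. \<forall>n\<ge>M. dist (xs m) (xs n) < \<epsilon>"
    proof (intro exI[of _ N] allI impI)
      fix m n assume mn: "N \<le> m" "N \<le> n"
      have em: "e m \<le> 1 / real (Suc N)" "e n \<le> 1 / real (Suc N)"
        using mn by (auto simp: e_def intro!: divide_left_mono)
      have "(dist (xs m) (xs n))^2 \<le> (4 * d + 2) * (e m + e n)"
        using key[of m n] by (simp add: dist_norm)
      also have "\<dots> \<le> (4 * d + 2) * (2 * (1 / real (Suc N)))"
        using add_mono[OF em] d0 by (intro mult_left_mono) auto
      also have "\<dots> < \<epsilon>^2"
      proof -
        have e2: "0 < \<epsilon>^2" using ep by simp
        have "2 * (4 * d + 2) < real N * \<epsilon>^2"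
          using N by (simp only: pos_divide_less_eq[OF e2])
        also have "\<dots> = \<epsilon>^2 * real N" by (rule mult.commute)
        also have "\<dots> \<le> \<epsilon>^2 * real (Suc N)" using e2 by (intro mult_left_mono) auto
        finally have "2 * (4 * d + 2) < \<epsilon>^2 * real (Suc N)" .
        then show ?thesis by (simp add: field_simps del: of_nat_Suc)
      qed
      finally have "(dist (xs m) (xs n))^2 < \<epsilon>^2" .
      then show "dist (xs m) (xs n) < \<epsilon>"
        using ep by (simp add: power_less_imp_less_base)
    qed
  qed
  then obtain x0 where lim: "xs \<longlonglongrightarrow> x0"
    using Cauchy_convergent_iff convergent_def by blast
  have "(\<lambda>n. f (xs n)) \<longlonglongrightarrow> f x0"
    by (rule bounded_linear.tendsto[OF blf lim])
  moreover have "(\<lambda>n. f (xs n)) = (\<lambda>n. 1)" using xs(1) by (simp add: S_def)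
  ultimately have "(\<lambda>n. 1) \<longlonglongrightarrow> f x0" by simp
  then have fx0: "f x0 = 1" using LIMSEQ_unique[OF tendsto_const] by metis
  have nx0: "norm x0 \<le> d"
  proof (rule LIMSEQ_le)
    show "(\<lambda>n. norm (xs n)) \<longlonglongrightarrow> norm x0" by (rule tendsto_norm[OF lim])
    show "(\<lambda>n. d + 1 / real (Suc n)) \<longlonglongrightarrow> d"
      using tendsto_add[OF tendsto_const LIMSEQ_inverse_real_of_nat] by (simp add: inverse_eq_divide)
    show "\<exists>N. \<forall>n\<ge>N. norm (xs n) \<le> d + 1 / real (Suc n)"
      using xs(2) by (intro exI[of _ 0] allI impI less_imp_le)
  qed
  have minx0: "norm x0 \<le> norm u" if "u \<in> S" for u using nx0 dle[OF that] by simp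
  have orth: "cinner v x0 = 0" if fv: "f v = 0" for v
  proof -
    define c where "c = cinner v x0"
    define \<epsilon> where "\<epsilon> = 1 / ((norm v)^2 + 1)"
    have pos: "0 < (norm v)^2 + 1" by (simp add: add_nonneg_pos)
    have ep: "0 < \<epsilon>" "\<epsilon> * (norm v)^2 < 1" using pos by (auto simp: \<epsilon>_def divide_simps)
    define t where "t = - of_real \<epsilon> * cnj c"
    have "x0 + scaleC t v \<in> S" using fx0 fv by (simp add: S_def add sc)
    then have "(norm x0)^2 \<le> (norm (x0 + scaleC t v))^2"
      using minx0 by (auto intro!: power_mono)
    also have "\<dots> = (norm x0)^2 + (cmod t)^2 * (norm v)^2 + 2 * Re (cinner x0 (scaleC t v))"
      by (simp add: norm_add_sq norm_scaleC power_mult_distrib)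
    also have "Re (cinner x0 (scaleC t v)) = - \<epsilon> * (cmod c)^2"
    proof -
      have "cinner x0 (scaleC t v) = cnj t * cnj c"
        by (simp add: cinner_scaleC_right c_def cinner_commute[of x0 v])
      also have "\<dots> = - of_real \<epsilon> * (c * cnj c)" by (simp add: t_def)
      also have "\<dots> = - of_real (\<epsilon> * (cmod c)^2)" by (simp add: complex_mult_cnj cmod_power2)
      finally show ?thesis by simp
    qed
    also have "(cmod t)^2 = \<epsilon>^2 * (cmod c)^2"
      using ep by (simp add: t_def norm_mult power_mult_distrib)
    finally have "0 \<le> \<epsilon> * (cmod c)^2 * (\<epsilon> * (norm v)^2 - 2)"
      by (simp add: power2_eq_square algebra_simps)
    moreover have "\<epsilon> * (norm v)^2 - 2 < 0" using ep by simp
    ultimately have "\<epsilon> * (cmod c)^2 \<le> 0"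
      by (simp add: mult_le_0_iff zero_le_mult_iff)
    then have "(cmod c)^2 \<le> 0" using ep by (simp add: mult_le_0_iff)
    then show ?thesis by (simp add: c_def)
  qed
  define N2 where "N2 = cinner x0 x0"
  have N2: "N2 = complex_of_real ((norm x0)^2)" by (simp add: N2_def cinner_self_eq)
  have x0nz: "x0 \<noteq> 0" using fx0 f0 by auto
  have N2nz: "N2 \<noteq> 0" using x0nz by (simp add: N2)
  show ?thesis
  proof (intro exI[of _ "scaleC (1 / N2) x0"] allI)
    fix x
    have "f (x - scaleC (f x) x0) = 0" using fx0 by (simp add: fdiff sc)
    then have "cinner (x - scaleC (f x) x0) x0 = 0" by (rule orth)
    then have "cinner x x0 = f x * N2"
      by (simp add: cinner_diff_left cinner_scaleC_left N2_def)
    then show "f x = cinner x (scaleC (1 / N2) x0)"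
      using N2nz by (simp add: cinner_scaleC_right N2)
  qed
qed



lemma bl_scaleC: "bounded_linear (\<lambda>x::'a::complex_hilbert. scaleC c x)"
  by (rule bounded_linear_intro[where K="cmod c"])
     (auto simp: scaleC_add_right scaleC_scaleR_comm norm_scaleC mult.commute)

lemma scaleC_minus_left: "scaleC (- a) (x::'a::complex_hilbert) = - scaleC a x"
proof -
  have "scaleC a x + scaleC (- a) x = 0" using scaleC_add_left[of a "-a" x] by simp
  from add.inverse_unique[OF this] show ?thesis by simp
qed

lemma bop_linear:
  assumes "bop A"
  shows "A (x + y) = A x + A y" "A (x - y) = A x - A y" "A (scaleR r x) = scaleR r (A x)"
    "A 0 = 0" "A (scaleC c x) = scaleC c (A x)"
  using assms unfolding bop_def
  by (auto simp: linear_simps)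

lemma adjoint_prop:
  assumes "bop (A::'a::complex_hilbert \<Rightarrow> 'a)"
  shows "cinner (A x) y = cinner x (adjoint_op A y)"
proof -
  obtain K where K: "\<And>x. norm (A x) \<le> norm x * K"
    using assms unfolding bop_def using bounded_linear.bounded by blast
  have "\<exists>z. \<forall>x. cinner (A x) y = cinner x z" for y
  proof (rule riesz[where M="K * norm y"])
    show "cinner (A (x + x')) y = cinner (A x) y + cinner (A x') y" for x x'
      by (simp add: bop_linear[OF assms] cinner_add_left)
    show "cinner (A (scaleC c x)) y = c * cinner (A x) y" for c x
      by (simp add: bop_linear[OF assms] cinner_scaleC_left)
    show "cmod (cinner (A x) y) \<le> K * norm y * norm x" for x
    proof -
      have "cmod (cinner (A x) y) \<le> norm (A x) * norm y" by (rule cauchy_schwarz)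
      also have "\<dots> \<le> norm x * K * norm y" using K[of x] by (simp add: mult_right_mono)
      finally show ?thesis by (simp add: ac_simps)
    qed
  qed
  then have "\<exists>B. \<forall>x y. cinner (A x) y = cinner x (B y)" by metis
  then have "\<forall>x y. cinner (A x) y = cinner x (adjoint_op A y)"
    unfolding adjoint_op_def by (rule someI_ex)
  then show ?thesis by blast
qed

lemma adjoint_bl:
  assumes A: "bop (A::'a::complex_hilbert \<Rightarrow> 'a)"
  shows "bounded_linear (adjoint_op A)"
proof -
  let ?B = "adjoint_op A"
  obtain K where K: "\<And>x. norm (A x) \<le> norm x * K" and K0: "0 \<le> K"
    using A unfolding bop_def using bounded_linear.nonneg_bounded by blast
  show ?thesis
  proof (rule bounded_linear_intro[where K=K])
    show "?B (x + y) = ?B x + ?B y" for x y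
      by (rule cinner_ext) (simp add: cinner_add_right flip: adjoint_prop[OF A])
    show "?B (scaleR r x) = scaleR r (?B x)" for r x
      by (rule cinner_ext) (simp add: cinner_scaleR_right flip: adjoint_prop[OF A])
    show "norm (?B y) \<le> norm y * K" for y
    proof -
      have "(norm (?B y))^2 = Re (cinner (?B y) (?B y))" by (rule norm_sq_cinner)
      also have "\<dots> = Re (cinner (A (?B y)) y)"
        by (simp add: adjoint_prop[OF A])
      also have "\<dots> \<le> cmod (cinner (A (?B y)) y)" by (rule complex_Re_le_cmod)
      also have "\<dots> \<le> norm (A (?B y)) * norm y" by (rule cauchy_schwarz)
      also have "\<dots> \<le> norm (?B y) * K * norm y" using K by (simp add: mult_right_mono)
      finally have h: "norm (?B y) * norm (?B y) \<le> norm (?B y) * (norm y * K)"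
        by (simp add: power2_eq_square ac_simps)
      show ?thesis
      proof (cases "?B y = 0")
        case True then show ?thesis using K0 by simp
      next
        case False then show ?thesis using h by simp
      qed
    qed
  qed
qed



lemma nr_bdd:
  assumes A: "bop (A::'a::complex_hilbert \<Rightarrow> 'a)"
  shows "bdd_above (insert 0 {cmod (cinner (A x) x) | x. norm x = 1})"
proof -
  obtain K where K: "\<And>x. norm (A x) \<le> norm x * K"
    using A unfolding bop_def using bounded_linear.bounded by blast
  have "cmod (cinner (A x) x) \<le> K" if "norm x = 1" for x
    using cauchy_schwarz[of "A x" x] K[of x] that by simp
  then show ?thesis by (auto intro!: bdd_aboveI[of _ "max 0 K"] simp: le_max_iff_disj)
qed

lemma nr_nonneg: assumes "bop A" shows "0 \<le> num_radius A"
  unfolding num_radius_def using nr_bdd[OF assms] by (auto intro: cSup_upper)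

lemma nr_bound:
  assumes A: "bop (A::'a::complex_hilbert \<Rightarrow> 'a)"
  shows "cmod (cinner (A z) z) \<le> num_radius A * (norm z)^2"
proof (cases "z = 0")
  case True then show ?thesis by (simp add: bop_linear[OF A])
next
  case False
  define u where "u = scaleR (1 / norm z) z"
  have nu: "norm u = 1" using False by (simp add: u_def)
  have "cinner (A u) u = cinner (A z) z / of_real ((norm z)^2)"
    by (simp add: u_def bop_linear[OF A] cinner_scaleR_left cinner_scaleR_right power2_eq_square)
  then have eq: "cmod (cinner (A u) u) = cmod (cinner (A z) z) / (norm z)^2"
    by (simp add: norm_divide norm_power)
  have "cmod (cinner (A u) u) \<le> num_radius A"
    unfolding num_radius_def using nr_bdd[OF A] nu by (auto intro!: cSup_upper)
  then show ?thesis using False eq by (simp add: divide_le_eq mult.commute)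
qed

definition Tc :: "complex \<Rightarrow> ('a::complex_hilbert \<Rightarrow> 'a) \<Rightarrow> 'a \<Rightarrow> 'a" where
  "Tc c A x = scaleC (1/2) (scaleC c (A x) + scaleC (cnj c) (adjoint_op A x))"

lemma Tc_bl: assumes A: "bop A" shows "bounded_linear (Tc c A)"
proof -
  have "bounded_linear (\<lambda>x. scaleC (1/2) (scaleC c (A x) + scaleC (cnj c) (adjoint_op A x)))"
    using A adjoint_bl[OF A] unfolding bop_def
    by (intro bounded_linear_compose[OF bl_scaleC] bounded_linear_add
          bounded_linear_compose[OF bl_scaleC[of c]] bounded_linear_compose[OF bl_scaleC[of "cnj c"]]) auto
  then show ?thesis unfolding Tc_def[abs_def] by simp
qed

lemma Tc_bound:
  assumes A: "bop (A::'a::complex_hilbert \<Rightarrow> 'a)" and c: "cmod c = 1"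
  shows "norm (Tc c A x) \<le> num_radius A * norm x"
proof -
  define w where "w = num_radius A"
  define q where "q z = Re (c * cinner (A z) z)" for z
  have qb: "\<bar>q z\<bar> \<le> w * (norm z)^2" for z
  proof -
    have "\<bar>q z\<bar> \<le> cmod (c * cinner (A z) z)" unfolding q_def by (rule abs_Re_le_cmod)
    also have "\<dots> = cmod (cinner (A z) z)" using c by (simp add: norm_mult)
    also have "\<dots> \<le> w * (norm z)^2" unfolding w_def by (rule nr_bound[OF A])
    finally show ?thesis .
  qed
  have qdiff: "q (x + y) - q (x - y) = 2 * Re (c * cinner (A x) y) + 2 * Re (c * cinner (A y) x)" for x y
    by (simp add: q_def bop_linear[OF A] cinner_add_left cinner_add_right cinner_diff_left
        cinner_diff_right algebra_simps)
  have reT: "Re (cinner (Tc c A x) y) = (Re (c * cinner (A x) y) + Re (c * cinner (A y) x)) / 2" for x y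
  proof -
    have "cinner (adjoint_op A x) y = cnj (cinner (A y) x)"
      by (simp add: adjoint_prop[OF A] cinner_commute[of _ y])
    then show ?thesis
      by (simp add: Tc_def cinner_scaleC_left cinner_add_left)
  qed
  have main: "4 * Re (cinner (Tc c A x) y) \<le> 2 * w * ((norm x)^2 + (norm y)^2)" for x y
  proof -
    have "4 * Re (cinner (Tc c A x) y) = q (x + y) - q (x - y)" by (simp add: reT qdiff)
    also have "\<dots> \<le> w * (norm (x + y))^2 + w * (norm (x - y))^2"
      using qb[of "x+y"] qb[of "x-y"] by (simp add: abs_le_iff)
    also have "\<dots> = 2 * w * ((norm x)^2 + (norm y)^2)"
      using arg_cong[OF parallelogram[of x y], of "\<lambda>s. w * s"] by (simp add: algebra_simps)
    finally show ?thesis .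
  qed
  show ?thesis
  proof (cases "Tc c A x = 0")
    case True then show ?thesis using nr_nonneg[OF A] by simp
  next
    case False
    define a where "a = norm (Tc c A x)"
    define b where "b = norm x"
    have a: "a > 0" using False a_def by simp
    define t where "t = b / a"
    have "4 * Re (cinner (Tc c A x) (scaleR t (Tc c A x))) \<le> 2 * w * (b^2 + (norm (scaleR t (Tc c A x)))^2)"
      using main[of x "scaleR t (Tc c A x)"] b_def by simp
    moreover have "Re (cinner (Tc c A x) (scaleR t (Tc c A x))) = t * a^2"
      by (simp add: cinner_scaleR_right a_def norm_sq_cinner)
    moreover have "norm (scaleR t (Tc c A x)) = b"
      using a by (simp add: t_def a_def b_def)
    ultimately have "4 * (b / a) * a^2 \<le> 2 * w * (b^2 + b^2)" by (simp add: t_def)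
    then have "4 * (b * a) \<le> 4 * (w * b * b)" using a by (simp add: power2_eq_square algebra_simps)
    then have h: "b * a \<le> b * (w * b)" by (simp add: ac_simps)
    show ?thesis
    proof (cases "b = 0")
      case True
      then have "x = 0" by (simp add: b_def)
      then have "Tc c A x = 0"
        using linear_simps(3)[OF Tc_bl[OF A]] by simp
      then show ?thesis using False by simp
    next
      case False
      then have "b > 0" by (simp add: b_def)
      then have "a \<le> w * b" using h by simp
      then show ?thesis by (simp add: a_def b_def w_def)
    qed
  qed
qed



lemma re_part_Tc: "re_part A = Tc 1 A"
  by (rule ext) (simp add: re_part_def Tc_def scaleC_one)

lemma im_part_Tc: "im_part (A::'a::complex_hilbert \<Rightarrow> 'a) = Tc (- \<i>) A"
proof (rule ext)
  fix x
  define v where "v = A x - adjoint_op A x"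
  have c: "1 / (2 * \<i>) = (1/2) * (- \<i>)" by (simp add: field_simps)
  have "im_part A x = scaleC (1 / (2 * \<i>)) v" by (simp add: im_part_def v_def)
  also have "\<dots> = scaleC (1/2) (scaleC (- \<i>) v)" by (simp only: c scaleC_scaleC)
  also have "scaleC (- \<i>) v = scaleC (- \<i>) (A x) + scaleC \<i> (adjoint_op A x)"
    unfolding v_def scaleC_diff_right scaleC_minus_left[of \<i> "adjoint_op A x"]
    by (simp only: diff_minus_eq_add)
  finally show "im_part A x = Tc (- \<i>) A x" by (simp add: Tc_def)
qed

lemma aux_arith:
  fixes a1 a2 a3 a4 a5 a6 :: real
  assumes "a3 = a1/4" "a4 = a2/4" "a1 + a2 = 2*a5+2*a6"
  shows "a5 + a6 = 2*(a3+a4)"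
  using assms by simp

lemma aux_arith2:
  fixes a1 a2 a3 a4 a5 a6 :: real
  assumes "a1 = 2*(a2 + a3)" "a2 \<le> a4" "a3 \<le> a5" "a6 = 2*a4 + 2*a5"
  shows "a1 \<le> a6"
  using assms by (smt (verit))

lemma key_bound:
  assumes A: "bop (A::'a::complex_hilbert \<Rightarrow> 'a)" and bij: "bij A"
    and bli: "bounded_linear (inv A)"
    and D: "D_op A \<le> 1 / (onorm (inv A))\<^sup>2"
  shows "(norm (A x))^2 \<le> 2 * (num_radius A)^2 * (norm x)^2"
proof -
  define B where "B = adjoint_op A"
  define w where "w = num_radius A"
  define a where "a = onorm (re_part A)"
  define b where "b = onorm (im_part A)"
  define K where "K = onorm (inv A)"
  have w0: "0 \<le> w" using nr_nonneg[OF A] by (simp add: w_def)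
  have blre: "bounded_linear (re_part A)" by (simp add: re_part_Tc Tc_bl[OF A])
  have blim: "bounded_linear (im_part A)" by (simp add: im_part_Tc Tc_bl[OF A])
  have a0: "0 \<le> a" and b0: "0 \<le> b" using onorm_pos_le[OF blre] onorm_pos_le[OF blim] by (auto simp: a_def b_def)
  have aw: "a \<le> w" unfolding a_def re_part_Tc w_def
    by (rule onorm_bound) (use w0 Tc_bound[OF A, of 1] in \<open>auto simp: w_def\<close>)
  have bw: "b \<le> w" unfolding b_def im_part_Tc w_def
    by (rule onorm_bound) (use w0 Tc_bound[OF A, of "- \<i>"] in \<open>auto simp: w_def\<close>)
  have K0: "0 \<le> K" using onorm_pos_le[OF bli] by (simp add: K_def)
  have n1: "norm (re_part A x) = norm (A x + B x) / 2"
    by (simp add: re_part_def B_def norm_scaleC)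
  have n2: "norm (im_part A x) = norm (A x - B x) / 2"
    by (simp add: im_part_def B_def norm_scaleC norm_divide)
  have sumeq: "(norm (A x))^2 + (norm (B x))^2 = 2 * ((norm (re_part A x))^2 + (norm (im_part A x))^2)"
  proof -
    have re: "(norm (re_part A x))^2 = (norm (A x + B x))^2 / 4" by (simp add: n1 power_divide)
    have im: "(norm (im_part A x))^2 = (norm (A x - B x))^2 / 4" by (simp add: n2 power_divide)
    from aux_arith[OF re im parallelogram[of "A x" "B x"]] show ?thesis .
  qed
  have r1: "(norm (re_part A x))^2 \<le> (a * norm x)^2"
    using onorm[OF blre, of x] by (intro power_mono) (auto simp: a_def)
  have r2: "(norm (im_part A x))^2 \<le> (b * norm x)^2"
    using onorm[OF blim, of x] by (intro power_mono) (auto simp: b_def)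
  have up: "(norm (A x))^2 + (norm (B x))^2 \<le> 2 * (a^2 + b^2) * (norm x)^2"
  proof -
    have "2 * (a^2 + b^2) * (norm x)^2 = 2 * (a * norm x)^2 + 2 * (b * norm x)^2"
      by (simp add: power_mult_distrib algebra_simps)
    from aux_arith2[OF sumeq r1 r2 this] show ?thesis .
  qed
  have lowB: "norm x \<le> K * norm (B x)"
  proof -
    have Ai: "A (inv A x) = x" using bij by (simp add: bij_is_surj surj_f_inv_f)
    have "(norm x)^2 = Re (cinner (A (inv A x)) x)" by (simp add: Ai norm_sq_cinner)
    also have "\<dots> = Re (cinner (inv A x) (B x))" by (simp add: adjoint_prop[OF A] B_def)
    also have "\<dots> \<le> norm (inv A x) * norm (B x)" by (rule Re_cauchy_schwarz)
    also have "\<dots> \<le> K * norm x * norm (B x)"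
      using onorm[OF bli, of x] by (intro mult_right_mono) (auto simp: K_def)
    finally have h: "norm x * norm x \<le> norm x * (K * norm (B x))" by (simp add: power2_eq_square ac_simps)
    show ?thesis
    proof (cases "x = 0")
      case True then show ?thesis using K0 by simp
    next
      case False then show ?thesis using h by simp
    qed
  qed
  have Dx: "D_op A * (norm x)^2 \<le> (norm (B x))^2"
  proof (cases "K = 0")
    case True
    then have "D_op A \<le> 0" using D by (simp add: K_def)
    then have "D_op A * (norm x)^2 \<le> 0" by (simp add: mult_nonpos_nonneg)
    then show ?thesis by (meson order_trans zero_le_power2)
  next
    case False
    then have Kp: "K > 0" using K0 by simp
    have "(norm x)^2 \<le> (K * norm (B x))^2" using lowB by (intro power_mono) auto
    then have h: "(norm x)^2 / K^2 \<le> (norm (B x))^2" using Kp by (simp add: divide_le_eq power_mult_distrib mult.commute)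
    have "D_op A * (norm x)^2 \<le> 1 / K^2 * (norm x)^2"
      using D by (intro mult_right_mono) (auto simp: K_def)
    also have "\<dots> \<le> (norm (B x))^2" using h by simp
    finally show ?thesis .
  qed
  have Deq: "D_op A = 2 * min (a^2) (b^2)" by (simp add: D_op_def a_def b_def)
  have "(norm (A x))^2 \<le> 2 * (a^2 + b^2) * (norm x)^2 - D_op A * (norm x)^2"
    using up Dx by simp
  also have "\<dots> = 2 * max (a^2) (b^2) * (norm x)^2"
  proof (cases "a^2 \<le> b^2")
    case True
    then have "min (a^2) (b^2) = a^2" "max (a^2) (b^2) = b^2" by auto
    then show ?thesis by (simp add: Deq) (simp add: algebra_simps)
  next
    case False
    then have "min (a^2) (b^2) = b^2" "max (a^2) (b^2) = a^2" by auto
    then show ?thesis by (simp add: Deq) (simp add: algebra_simps)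
  qed
  also have "\<dots> \<le> 2 * w^2 * (norm x)^2"
  proof -
    have "a^2 \<le> w^2" "b^2 \<le> w^2" using aw bw a0 b0 by (auto intro: power_mono)
    then show ?thesis by (intro mult_right_mono) auto
  qed
  finally show ?thesis by (simp add: w_def)
qed

lemma key_norm:
  assumes A: "bop (A::'a::complex_hilbert \<Rightarrow> 'a)" and bij: "bij A"
    and bli: "bounded_linear (inv A)"
    and D: "D_op A \<le> 1 / (onorm (inv A))\<^sup>2"
  shows "norm (A x) \<le> sqrt 2 * num_radius A * norm x"
proof -
  have "(sqrt 2 * num_radius A * norm x)^2 = 2 * (num_radius A)^2 * (norm x)^2"
    by (simp add: power_mult_distrib)
  then have "(norm (A x))^2 \<le> (sqrt 2 * num_radius A * norm x)^2"
    using key_bound[OF assms, of x] by simp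
  moreover have "0 \<le> sqrt 2 * num_radius A * norm x" using nr_nonneg[OF A] by simp
  ultimately show ?thesis by (rule power2_le_imp_le)
qed

theorem corollary2p3:
  fixes R S :: "'a::complex_hilbert \<Rightarrow> 'a"
  assumes "bop R" and "bop S"
    and "bij R" and "bij S"
    and "bounded_linear (inv R)" and "bounded_linear (inv S)"
    and "D_op R \<le> 1 / (onorm (inv R))\<^sup>2"
    and "D_op S \<le> 1 / (onorm (inv S))\<^sup>2"
  shows "num_radius (R \<circ> S) \<le> 2 * num_radius R * num_radius S"
proof -
  have kR: "norm (R y) \<le> sqrt 2 * num_radius R * norm y" for y
    using key_norm[OF assms(1,3,5,7)] .
  have kS: "norm (S y) \<le> sqrt 2 * num_radius S * norm y" for y
    using key_norm[OF assms(2,4,6,8)] .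
  have wR: "0 \<le> num_radius R" and wS: "0 \<le> num_radius S"
    using nr_nonneg assms(1,2) by auto
  have el: "cmod (cinner ((R \<circ> S) x) x) \<le> 2 * num_radius R * num_radius S" if "norm x = 1" for x
  proof -
    have "cmod (cinner ((R \<circ> S) x) x) \<le> norm (R (S x)) * norm x" using cauchy_schwarz by simp
    also have "\<dots> = norm (R (S x))" using that by simp
    also have "\<dots> \<le> sqrt 2 * num_radius R * norm (S x)" by (rule kR)
    also have "\<dots> \<le> sqrt 2 * num_radius R * (sqrt 2 * num_radius S * norm x)"
      using wR kS[of x] by (intro mult_left_mono) auto
    also have "\<dots> = 2 * num_radius R * num_radius S" using that by simp
    finally show ?thesis .
  qed
  show ?thesis unfolding num_radius_def[of "R \<circ> S"]
    by (rule cSup_least) (use el wR wS in auto)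
qed

end
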